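(* Let $(X,f)$ be a dynamical system and let $S\subset X$ be an uncountable syndetically scrambled set for $f$ such that for every nonempty open $U\subset X$ there is $n\in\mathbb N$ with $f^n(S)\subset f^n(U)$. Then $f$ has a c-dense syndetically scrambled set $T$. If $S$ is moreover a Cantor set, then $T$ can be chosen to be a dense Mycielski set. Moreover, if $S$ is syndetically $\varepsilon$-scrambled, then $T$ is syndetically $\varepsilon$-scrambled.
   Context: Dynamical system: compact metric space $X$ with metric $d$ and continuous $f$. $T\subset X$ is c-dense if $T\cap U$ is uncountable for every nonempty open $U$. Syndetic: subset of $\mathbb N$ meeting every set with arbitrarily long runs of consecutive integers. $\mathrm{Asy}(f)=\{(x,y):d(f^nx,f^ny)\to0\}$, $\mathrm{SProx}(f)=\{(x,y):\{n:d(f^nx,f^ny)<\eta\}$ syndetic for all $\eta>0\}$. A syndetically scrambled set has at least two points and all distinct pairs in $\mathrm{SProx}(f)\setminus\mathrm{Asy}(f)$; it is syndetically $\varepsilon$-scrambled if also $\limsup_n d(f^nx,f^ny)\ge\varepsilon$ for all distinct $x,y$ in it. Cantor set: nonempty compact perfect totally disconnected; Mycielski set: countable union of Cantor sets. *)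

theory Defs
  imports "HOL-Analysis.Analysis"
begin

definition thick :: "nat set \<Rightarrow> bool" where
  "thick B \<longleftrightarrow> (\<forall>k. \<exists>m. {m..<m+k} \<subseteq> B)"

definition syndetic :: "nat set \<Rightarrow> bool" where
  "syndetic A \<longleftrightarrow> (\<forall>B. thick B \<longrightarrow> A \<inter> B \<noteq> {})"

definition Asy :: "'a::metric_space set \<Rightarrow> ('a \<Rightarrow> 'a) \<Rightarrow> ('a \<times> 'a) set" where
  "Asy X f = {(x, y). x \<in> X \<and> y \<in> X \<and>
      (\<lambda>n. dist ((f ^^ n) x) ((f ^^ n) y)) \<longlonglongrightarrow> 0}"

definition SProx :: "'a::metric_space set \<Rightarrow> ('a \<Rightarrow> 'a) \<Rightarrow> ('a \<times> 'a) set" where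
  "SProx X f = {(x, y). x \<in> X \<and> y \<in> X \<and>
      (\<forall>\<eta>>0. syndetic {n. dist ((f ^^ n) x) ((f ^^ n) y) < \<eta>})}"

definition synd_scrambled :: "'a::metric_space set \<Rightarrow> ('a \<Rightarrow> 'a) \<Rightarrow> 'a set \<Rightarrow> bool" where
  "synd_scrambled X f S \<longleftrightarrow> S \<subseteq> X \<and> (\<exists>x\<in>S. \<exists>y\<in>S. x \<noteq> y) \<and>
     (\<forall>x\<in>S. \<forall>y\<in>S. x \<noteq> y \<longrightarrow> (x, y) \<in> SProx X f - Asy X f)"

definition synd_eps_scrambled :: "'a::metric_space set \<Rightarrow> ('a \<Rightarrow> 'a) \<Rightarrow> real \<Rightarrow> 'a set \<Rightarrow> bool" where
  "synd_eps_scrambled X f \<epsilon> S \<longleftrightarrow> synd_scrambled X f S \<and>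
     (\<forall>x\<in>S. \<forall>y\<in>S. x \<noteq> y \<longrightarrow>
        limsup (\<lambda>n. ereal (dist ((f ^^ n) x) ((f ^^ n) y))) \<ge> ereal \<epsilon>)"

definition c_dense :: "'a::metric_space set \<Rightarrow> 'a set \<Rightarrow> bool" where
  "c_dense X T \<longleftrightarrow> T \<subseteq> X \<and> (\<forall>U. openin (top_of_set X) U \<and> U \<noteq> {} \<longrightarrow> uncountable (T \<inter> U))"

definition totally_disconnected_set :: "'a::topological_space set \<Rightarrow> bool" where
  "totally_disconnected_set C \<longleftrightarrow> (\<forall>K. K \<subseteq> C \<and> connected K \<longrightarrow> (\<forall>x\<in>K. \<forall>y\<in>K. x = y))"

definition cantor_set :: "'a::metric_space set \<Rightarrow> bool" where
  "cantor_set C \<longleftrightarrow> C \<noteq> {} \<and> compact C \<and> (\<forall>x\<in>C. x islimpt C) \<and> totally_disconnected_set C"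

definition mycielski_set :: "'a::metric_space set \<Rightarrow> bool" where
  "mycielski_set M \<longleftrightarrow> (\<exists>\<C>. countable \<C> \<and> (\<forall>C\<in>\<C>. cantor_set C) \<and> M = \<Union>\<C>)"

end

theory Submission
  imports Defs
begin


definition trk :: "('a \<Rightarrow> 'a) \<Rightarrow> 'a \<Rightarrow> 'a \<Rightarrow> bool" where
  "trk f x s \<longleftrightarrow> (\<exists>N. (f ^^ N) x = (f ^^ N) s)"

lemma trk_shift:
  fixes f :: "'a \<Rightarrow> 'a"
  assumes "(f ^^ N) x = (f ^^ N) s" "N \<le> n"
  shows "(f ^^ n) x = (f ^^ n) s"
proof -
  have "n = (n - N) + N" using assms(2) by simp
  then have "f ^^ n = (f ^^ (n - N)) \<circ> (f ^^ N)" by (metis funpow_add)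
  then show ?thesis using assms(1) by simp
qed

lemma trk_ev:
  assumes "trk f x s"
  shows "eventually (\<lambda>n. (f ^^ n) x = (f ^^ n) s) sequentially"
  using assms trk_shift unfolding trk_def eventually_sequentially by metis

lemma trk_unique:
  assumes "synd_scrambled X f S" "s \<in> S" "t \<in> S" "trk f x s" "trk f x t"
  shows "s = t"
proof (rule ccontr)
  assume ne: "s \<noteq> t"
  have "eventually (\<lambda>n. dist ((f ^^ n) s) ((f ^^ n) t) = 0) sequentially"
    using eventually_conj[OF trk_ev[OF assms(4)] trk_ev[OF assms(5)]]
    by (rule eventually_mono) auto
  then have "(\<lambda>n. dist ((f ^^ n) s) ((f ^^ n) t)) \<longlonglongrightarrow> 0"
    by (rule tendsto_eventually)
  then have "(s, t) \<in> Asy X f" using assms(1-3) unfolding Asy_def synd_scrambled_def by auto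
  then show False using assms(1-3) ne unfolding synd_scrambled_def by auto
qed

lemma thick_shift: "thick B \<Longrightarrow> thick (B \<inter> {N..})"
  unfolding thick_def
proof
  fix k assume "\<forall>k. \<exists>m. {m..<m + k} \<subseteq> B"
  then obtain m where "{m..<m + (k + N)} \<subseteq> B" by blast
  then show "\<exists>m. {m..<m + k} \<subseteq> B \<inter> {N..}"
    by (intro exI[of _ "m + N"]) auto
qed

lemma syndetic_shift:
  assumes "syndetic A" "\<And>n. n \<ge> N \<Longrightarrow> n \<in> A \<Longrightarrow> n \<in> A'"
  shows "syndetic A'"
  unfolding syndetic_def
proof (intro allI impI)
  fix B assume "thick B"
  then have "A \<inter> (B \<inter> {N..}) \<noteq> {}" using assms(1) thick_shift unfolding syndetic_def by blast
  then show "A' \<inter> B \<noteq> {}" using assms(2) by auto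
qed

lemma trk_pair:
  assumes sc: "synd_scrambled X f S" and s: "s \<in> S" "s' \<in> S" "s \<noteq> s'"
    and x: "x \<in> X" "y \<in> X" and tr: "trk f x s" "trk f y s'"
  shows "(x, y) \<in> SProx X f - Asy X f"
    and "limsup (\<lambda>n. ereal (dist ((f ^^ n) x) ((f ^^ n) y))) =
         limsup (\<lambda>n. ereal (dist ((f ^^ n) s) ((f ^^ n) s')))"
proof -
  have ev: "eventually (\<lambda>n. dist ((f ^^ n) s) ((f ^^ n) s') = dist ((f ^^ n) x) ((f ^^ n) y)) sequentially"
    using eventually_conj[OF trk_ev[OF tr(1)] trk_ev[OF tr(2)]] by (rule eventually_mono) auto
  then obtain N where N: "\<And>n. n \<ge> N \<Longrightarrow> dist ((f ^^ n) s) ((f ^^ n) s') = dist ((f ^^ n) x) ((f ^^ n) y)"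
    unfolding eventually_sequentially by blast
  have ss: "(s, s') \<in> SProx X f - Asy X f" using sc s unfolding synd_scrambled_def by auto
  have "(x, y) \<in> SProx X f"
    unfolding SProx_def
  proof (safe intro!: x)
    fix \<eta> :: real assume "\<eta> > 0"
    then have "syndetic {n. dist ((f ^^ n) s) ((f ^^ n) s') < \<eta>}" using ss unfolding SProx_def by auto
    then show "syndetic {n. dist ((f ^^ n) x) ((f ^^ n) y) < \<eta>}"
      by (rule syndetic_shift[where N=N]) (use N in auto)
  qed
  moreover have "(x, y) \<notin> Asy X f"
  proof
    assume "(x, y) \<in> Asy X f"
    then have "(\<lambda>n. dist ((f ^^ n) x) ((f ^^ n) y)) \<longlonglongrightarrow> 0" unfolding Asy_def by auto
    then have "(\<lambda>n. dist ((f ^^ n) s) ((f ^^ n) s')) \<longlonglongrightarrow> 0"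
      by (rule Lim_transform_eventually) (use ev in \<open>auto elim: eventually_mono\<close>)
    then have "(s, s') \<in> Asy X f" using sc s unfolding Asy_def synd_scrambled_def by auto
    then show False using ss by auto
  qed
  ultimately show "(x, y) \<in> SProx X f - Asy X f" by auto
  show "limsup (\<lambda>n. ereal (dist ((f ^^ n) x) ((f ^^ n) y))) =
         limsup (\<lambda>n. ereal (dist ((f ^^ n) s) ((f ^^ n) s')))"
    by (rule Limsup_eq) (use ev in \<open>auto elim: eventually_mono\<close>)
qed

lemma core:
  assumes sc: "synd_scrambled X f S" and ne: "X \<noteq> {}" and TX: "T \<subseteq> X"
    and unc: "\<And>U. openin (top_of_set X) U \<Longrightarrow> U \<noteq> {} \<Longrightarrow> uncountable (T \<inter> U)"
    and tr: "\<And>x. x \<in> T \<Longrightarrow> \<exists>s\<in>S. trk f x s"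
    and dis: "\<And>x y s s'. x \<in> T \<Longrightarrow> y \<in> T \<Longrightarrow> x \<noteq> y \<Longrightarrow> s \<in> S \<Longrightarrow> s' \<in> S \<Longrightarrow>
               trk f x s \<Longrightarrow> trk f y s' \<Longrightarrow> s \<noteq> s'"
  shows "c_dense X T \<and> synd_scrambled X f T \<and>
         (\<forall>\<epsilon>. synd_eps_scrambled X f \<epsilon> S \<longrightarrow> synd_eps_scrambled X f \<epsilon> T)"
proof -
  have cd: "c_dense X T" unfolding c_dense_def using TX unc by auto
  have "uncountable (T \<inter> X)" using unc[of X] ne by auto
  then have "infinite T" using uncountable_infinite by (metis countable_finite inf_le1 rev_finite_subset uncountable_def)
  then obtain a b where ab: "a \<in> T" "b \<in> T" "a \<noteq> b"
    by (metis finite.simps insertCI subsetI finite_subset)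
  have pair: "\<exists>s\<in>S. \<exists>s'\<in>S. s \<noteq> s' \<and> trk f x s \<and> trk f y s'"
    if "x \<in> T" "y \<in> T" "x \<noteq> y" for x y
    using tr[OF that(1)] tr[OF that(2)] dis[OF that] by blast
  have st: "synd_scrambled X f T"
    unfolding synd_scrambled_def
  proof (intro conjI ballI impI)
    show "T \<subseteq> X" by fact
    show "\<exists>x\<in>T. \<exists>y\<in>T. x \<noteq> y" using ab by blast
  next
    fix x y assume xy: "x \<in> T" "y \<in> T" "x \<noteq> y"
    then obtain s s' where "s \<in> S" "s' \<in> S" "s \<noteq> s'" "trk f x s" "trk f y s'" using pair by blast
    then show "(x, y) \<in> SProx X f - Asy X f" using trk_pair(1)[OF sc] xy TX by blast
  qed
  have "synd_eps_scrambled X f \<epsilon> T" if e: "synd_eps_scrambled X f \<epsilon> S" for \<epsilon>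
    unfolding synd_eps_scrambled_def
  proof (intro conjI ballI impI st)
    fix x y assume xy: "x \<in> T" "y \<in> T" "x \<noteq> y"
    then obtain s s' where ss: "s \<in> S" "s' \<in> S" "s \<noteq> s'" "trk f x s" "trk f y s'" using pair by blast
    then have "limsup (\<lambda>n. ereal (dist ((f ^^ n) x) ((f ^^ n) y))) =
         limsup (\<lambda>n. ereal (dist ((f ^^ n) s) ((f ^^ n) s')))" using trk_pair(2)[OF sc] xy TX by blast
    then show "ereal \<epsilon> \<le> limsup (\<lambda>n. ereal (dist ((f ^^ n) x) ((f ^^ n) y)))"
      using e ss unfolding synd_eps_scrambled_def by auto
  qed
  then show ?thesis using cd st by blast
qed



lemma basis_ex:
  fixes X :: "'a::metric_space set"
  assumes "compact X" "X \<noteq> {}"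
  shows "\<exists>c r. (\<forall>k::nat. c k \<in> X \<and> r k > (0::real)) \<and>
     (\<forall>U. openin (top_of_set X) U \<and> U \<noteq> {} \<longrightarrow> (\<exists>k. ball (c k) (r k) \<inter> X \<subseteq> U))"
proof -
  have "\<forall>m. \<exists>F. F \<subseteq> X \<and> finite F \<and> X \<subseteq> (\<Union>c\<in>F. ball c (1 / Suc m))"
  proof
    fix m
    have "X \<subseteq> (\<Union>c\<in>X. ball c (1 / Suc m))" by (auto intro!: bexI)
    then obtain C' where "C' \<subseteq> X" "finite C'" "X \<subseteq> (\<Union>c\<in>C'. ball c (1 / Suc m))"
      using compactE_image[OF assms(1), of X "\<lambda>c. ball c (1 / Suc m)"] by auto
    then show "\<exists>F. F \<subseteq> X \<and> finite F \<and> X \<subseteq> (\<Union>c\<in>F. ball c (1 / Suc m))" by blast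
  qed
  then obtain F where F0: "\<forall>m. F m \<subseteq> X \<and> finite (F m) \<and> X \<subseteq> (\<Union>c\<in>F m. ball c (1 / Suc m))"
    by (rule choice_iff[THEN iffD1, elim_format]) blast
  have F: "\<And>m. F m \<subseteq> X" "\<And>m. finite (F m)" "\<And>m. X \<subseteq> (\<Union>c\<in>F m. ball c (1 / Suc m))"
    using F0 by auto
  define D where "D = (\<Union>m. (\<lambda>c. (c, 1 / real (Suc m))) ` F m)"
  have cD: "countable D" unfolding D_def using F(2) by (simp add: countable_finite)
  have "F 0 \<noteq> {}" using F(3)[of 0] assms(2) by auto
  then have neD: "D \<noteq> {}" unfolding D_def by auto
  define p where "p = from_nat_into D"
  have rp: "range p = D" unfolding p_def using cD neD by simp
  show ?thesis
  proof -
  have A: "fst (p k) \<in> X \<and> snd (p k) > 0" for k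
  proof -
    have "p k \<in> D" using rp by auto
    then obtain m c where "c \<in> F m" "p k = (c, 1 / real (Suc m))" unfolding D_def by blast
    then show ?thesis using F(1) by auto
  qed
  have B: "\<exists>k. ball (fst (p k)) (snd (p k)) \<inter> X \<subseteq> U" if U: "openin (top_of_set X) U \<and> U \<noteq> {}" for U
  proof -
    obtain x where x: "x \<in> U" using U by auto
    then obtain e where e: "e > 0" "ball x e \<inter> X \<subseteq> U" using U x unfolding openin_contains_ball by blast
    obtain n :: nat where n: "n \<noteq> 0" "inverse (real n) < e / 2"
      using real_arch_inverse[of "e/2"] e(1) by auto
    define m where "m = n - 1"
    have "Suc m = n" using n(1) unfolding m_def by simp
    then have m: "1 / real (Suc m) < e / 2" using n(2) by (simp add: inverse_eq_divide)
    have xX: "x \<in> X" using U x openin_imp_subset by blast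
    then obtain c where c: "c \<in> F m" "x \<in> ball c (1 / Suc m)" using F(3) by blast
    have "(c, 1 / real (Suc m)) \<in> range p" using c(1) unfolding rp D_def by blast
    then obtain k where k: "p k = (c, 1 / real (Suc m))" by auto
    have "ball c (1 / Suc m) \<subseteq> ball x e"
    proof
      fix z assume "z \<in> ball c (1 / Suc m)"
      then have "dist c z < 1 / Suc m" by simp
      moreover have "dist x c < 1 / Suc m" using c(2) by (simp add: dist_commute)
      moreover have "dist x z \<le> dist x c + dist c z" by (rule dist_triangle)
      ultimately have "dist x z < e" using m by linarith
      then show "z \<in> ball x e" by simp
    qed
    then have "ball c (1 / Suc m) \<inter> X \<subseteq> U" using e(2) by blast
    then show "\<exists>k. ball (fst (p k)) (snd (p k)) \<inter> X \<subseteq> U" by (intro exI[of _ k]) (simp add: k)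
  qed
  have "(\<forall>k. fst (p k) \<in> X \<and> snd (p k) > 0) \<and> (\<forall>U. openin (top_of_set X) U \<and> U \<noteq> {} \<longrightarrow> (\<exists>k. ball (fst (p k)) (snd (p k)) \<inter> X \<subseteq> U))"
    using A B by blast
  note AB = this
  show ?thesis
    apply (rule_tac x="\<lambda>k. fst (p k)" in exI)
    apply (rule_tac x="\<lambda>k. snd (p k)" in exI)
    using AB by simp
  qed
qed


lemma pieces_ex:
  assumes "uncountable S"
  shows "\<exists>P. (\<forall>k::nat. P k \<subseteq> S \<and> uncountable (P k)) \<and> (\<forall>k j. k \<noteq> j \<longrightarrow> P k \<inter> P j = {})"
proof -
  have inf: "infinite S" using assms uncountable_infinite by blast
  then obtain g where g: "bij_betw g (S \<times> S) S" using card_of_ordIso[THEN iffD2, OF card_of_Times_same_infinite[OF inf]] by blast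
  obtain e :: "nat \<Rightarrow> _" where e: "inj e" "range e \<subseteq> S" using infinite_countable_subset[OF inf] by blast
  define P where "P k = g ` (S \<times> {e k})" for k
  have "(\<forall>k. P k \<subseteq> S \<and> uncountable (P k)) \<and> (\<forall>k j. k \<noteq> j \<longrightarrow> P k \<inter> P j = {})"
  proof (intro conjI allI impI)
    fix k
    have sub: "S \<times> {e k} \<subseteq> S \<times> S" using e by auto
    then show "P k \<subseteq> S" unfolding P_def using g bij_betw_imp_surj_on by blast
    have "uncountable (S \<times> {e k})"
    proof
      assume "countable (S \<times> {e k})"
      then have "countable (fst ` (S \<times> {e k}))" by (rule countable_image)
      moreover have "fst ` (S \<times> {e k}) = S" by force
      ultimately show False using assms by simp
    qed
    moreover have "inj_on g (S \<times> {e k})" using g sub bij_betw_imp_inj_on inj_on_subset by blast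
    ultimately show "uncountable (P k)" unfolding P_def using countable_image_inj_on by blast
  next
    fix k j :: nat assume kj: "k \<noteq> j"
    show "P k \<inter> P j = {}"
    proof (rule ccontr)
      assume "P k \<inter> P j \<noteq> {}"
      then obtain a b where ab: "a \<in> S" "b \<in> S" "g (a, e k) = g (b, e j)" unfolding P_def by auto
      have "(a, e k) = (b, e j)"
        using g ab e(2) unfolding bij_betw_def inj_on_def by blast
      then show False using e(1) kj by (auto dest: injD)
    qed
  qed
  note PP = this
  show ?thesis
    apply (rule_tac x=P in exI)
    using PP by blast
qed



lemma gen_case:
  fixes X :: "'a::metric_space set" and f :: "'a \<Rightarrow> 'a"
  assumes cX: "compact X" and uS: "uncountable S" and sc: "synd_scrambled X f S"
    and hyp: "\<forall>U. openin (top_of_set X) U \<and> U \<noteq> {} \<longrightarrow> (\<exists>n. (f ^^ n) ` S \<subseteq> (f ^^ n) ` U)"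
  shows "\<exists>T. c_dense X T \<and> synd_scrambled X f T \<and>
         (\<forall>\<epsilon>. synd_eps_scrambled X f \<epsilon> S \<longrightarrow> synd_eps_scrambled X f \<epsilon> T)"
proof -
  have SX: "S \<subseteq> X" using sc unfolding synd_scrambled_def by auto
  have neX: "X \<noteq> {}" using SX uS by auto
  obtain c r where cr: "\<forall>k::nat. c k \<in> X \<and> r k > (0::real)"
    and bas: "\<forall>U. openin (top_of_set X) U \<and> U \<noteq> {} \<longrightarrow> (\<exists>k. ball (c k) (r k) \<inter> X \<subseteq> U)"
    using basis_ex[OF cX neX] by blast
  define Bs where "Bs k = ball (c k) (r k) \<inter> X" for k
  have Bso: "openin (top_of_set X) (Bs k) \<and> Bs k \<noteq> {}" for k
  proof
    show "openin (top_of_set X) (Bs k)" unfolding Bs_def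
      using openin_open_Int[of "ball (c k) (r k)" X] by (simp add: Int_commute)
    have "c k \<in> Bs k" using cr by (simp add: Bs_def)
    then show "Bs k \<noteq> {}" by blast
  qed
  have "\<forall>k. \<exists>n. (f ^^ n) ` S \<subseteq> (f ^^ n) ` Bs k"
  proof
    fix k show "\<exists>n. (f ^^ n) ` S \<subseteq> (f ^^ n) ` Bs k" using hyp[rule_format, OF Bso[of k]] .
  qed
  then obtain n where n: "\<And>k. (f ^^ n k) ` S \<subseteq> (f ^^ n k) ` Bs k"
    by (rule choice_iff[THEN iffD1, elim_format]) blast
  obtain P where P: "\<And>k::nat. P k \<subseteq> S \<and> uncountable (P k)" "\<And>k j. k \<noteq> j \<Longrightarrow> P k \<inter> P j = {}"
    using pieces_ex[OF uS] by blast
  define sel where "sel k s = (SOME x. x \<in> Bs k \<and> (f ^^ n k) x = (f ^^ n k) s)" for k s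
  have selp: "sel k s \<in> Bs k \<and> (f ^^ n k) (sel k s) = (f ^^ n k) s" if "s \<in> S" for k s
  proof -
    have "(f ^^ n k) s \<in> (f ^^ n k) ` Bs k" using n that by blast
    then have "\<exists>x. x \<in> Bs k \<and> (f ^^ n k) x = (f ^^ n k) s" by force
    then show ?thesis unfolding sel_def by (rule someI_ex)
  qed
  have seltrk: "trk f (sel k s) s" if "s \<in> S" for k s
    unfolding trk_def using selp[OF that] by blast
  define T where "T = (\<Union>k. sel k ` P k)"
  have TX: "T \<subseteq> X"
  proof
    fix x assume "x \<in> T"
    then obtain k t where "t \<in> P k" "x = sel k t" unfolding T_def by blast
    then have "x \<in> Bs k" using selp P(1) by blast
    then show "x \<in> X" unfolding Bs_def by blast
  qed
  have unc: "uncountable (T \<inter> U)" if "openin (top_of_set X) U" "U \<noteq> {}" for U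
  proof -
    have "\<exists>k. ball (c k) (r k) \<inter> X \<subseteq> U" using bas[rule_format, OF conjI[OF that]] .
    then obtain k where k: "Bs k \<subseteq> U" unfolding Bs_def by blast
    have inj: "inj_on (sel k) (P k)"
    proof (rule inj_onI)
      fix s t assume st: "s \<in> P k" "t \<in> P k" "sel k s = sel k t"
      then have "s \<in> S" "t \<in> S" using P(1) by auto
      then show "s = t" using trk_unique[OF sc] seltrk st(3) by metis
    qed
    have "uncountable (sel k ` P k)" using inj P(1) countable_image_inj_on by blast
    moreover have "sel k ` P k \<subseteq> T \<inter> U" unfolding T_def using k selp P(1) by blast
    ultimately show ?thesis using countable_subset by blast
  qed
  have tr: "\<exists>s\<in>S. trk f x s" if "x \<in> T" for x
    using that P(1) seltrk unfolding T_def by blast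
  have dis: "s \<noteq> s'" if xy: "x \<in> T" "y \<in> T" "x \<noteq> y" and ss: "s \<in> S" "s' \<in> S"
      and tt: "trk f x s" "trk f y s'" for x y s s'
  proof
    assume eq: "s = s'"
    obtain k t where kt: "t \<in> P k" "x = sel k t" using xy(1) unfolding T_def by blast
    obtain j t' where jt: "t' \<in> P j" "y = sel j t'" using xy(2) unfolding T_def by blast
    have tS: "t \<in> S" "t' \<in> S" using kt jt P(1) by auto
    have "s = t" using trk_unique[OF sc ss(1) tS(1) tt(1)] seltrk[OF tS(1)] kt by simp
    moreover have "s' = t'" using trk_unique[OF sc ss(2) tS(2) tt(2)] seltrk[OF tS(2)] jt by simp
    ultimately have "t = t'" using eq by simp
    then have "k = j" using P(2) kt(1) jt(1) by blast
    then show False using xy(3) kt jt \<open>t = t'\<close> by simp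
  qed
  have R: "c_dense X T \<and> synd_scrambled X f T \<and>
         (\<forall>\<epsilon>. synd_eps_scrambled X f \<epsilon> S \<longrightarrow> synd_eps_scrambled X f \<epsilon> T)"
    apply (rule core[OF sc neX TX])
      apply (erule (1) unc)
     apply (erule tr)
    apply (rule dis; assumption)
    done
  show ?thesis by (rule exI[of _ T]) (rule R)
qed



lemma cond_pt:
  fixes Y :: "'b::metric_space set"
  assumes cY: "compact Y" and uY: "uncountable Y"
  shows "\<exists>y\<in>Y. \<forall>e>0. uncountable (Y \<inter> ball y e)"
proof (rule ccontr)
  assume "\<not> ?thesis"
  then have "\<forall>y\<in>Y. \<exists>e. e > 0 \<and> countable (Y \<inter> ball y e)" by auto
  then obtain e where e: "\<forall>y\<in>Y. e y > 0 \<and> countable (Y \<inter> ball y (e y))"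
    using bchoice[of Y "\<lambda>y e. e > 0 \<and> countable (Y \<inter> ball y e)"] by blast
  have cov: "Y \<subseteq> (\<Union>y\<in>Y. ball y (e y))"
  proof
    fix x assume "x \<in> Y" then have "x \<in> ball x (e x)" using e by simp
    then show "x \<in> (\<Union>y\<in>Y. ball y (e y))" using \<open>x \<in> Y\<close> by blast
  qed
  obtain F where F: "F \<subseteq> Y" "finite F" "Y \<subseteq> (\<Union>y\<in>F. ball y (e y))"
    using compactE_image[OF cY, of Y "\<lambda>y. ball y (e y)"] cov by auto
  have "Y = (\<Union>y\<in>F. Y \<inter> ball y (e y))" using F(3) by blast
  moreover have "countable (\<Union>y\<in>F. Y \<inter> ball y (e y))"
    by (rule countable_UN[OF countable_finite[OF F(2)]]) (use F(1) e in auto)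
  ultimately show False using uY by simp
qed

lemma shrink:
  fixes A :: "'a::metric_space set" and \<phi> :: "'a \<Rightarrow> 'b"
  assumes cA: "compact A" and uA: "uncountable (\<phi> ` A)" and e: "e > 0"
  shows "\<exists>c. uncountable (\<phi> ` (A \<inter> cball c e))"
proof (rule ccontr)
  assume "\<not> ?thesis"
  then have cnt: "countable (\<phi> ` (A \<inter> cball c e))" for c by auto
  have cov: "A \<subseteq> (\<Union>c\<in>A. ball c e)"
  proof
    fix x assume "x \<in> A" then have "x \<in> ball x e" using e by simp
    then show "x \<in> (\<Union>c\<in>A. ball c e)" using \<open>x \<in> A\<close> by blast
  qed
  obtain F where F: "F \<subseteq> A" "finite F" "A \<subseteq> (\<Union>c\<in>F. ball c e)"
    using compactE_image[OF cA, of A "\<lambda>c. ball c e"] cov by auto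
  have "\<phi> ` A \<subseteq> (\<Union>c\<in>F. \<phi> ` (A \<inter> cball c e))"
  proof
    fix z assume "z \<in> \<phi> ` A"
    then obtain x where x: "x \<in> A" "z = \<phi> x" by blast
    then obtain c where "c \<in> F" "x \<in> ball c e" using F(3) by blast
    then have "x \<in> A \<inter> cball c e" using x by auto
    then show "z \<in> (\<Union>c\<in>F. \<phi> ` (A \<inter> cball c e))" using \<open>c \<in> F\<close> x by blast
  qed
  moreover have "countable (\<Union>c\<in>F. \<phi> ` (A \<inter> cball c e))"
    by (rule countable_UN[OF countable_finite[OF F(2)]]) (rule cnt)
  ultimately show False using uA countable_subset by blast
qed

definition SP :: "('a::metric_space \<Rightarrow> 'b) \<Rightarrow> 'a set \<Rightarrow> real \<Rightarrow> 'a set \<Rightarrow> 'a set \<Rightarrow> bool" where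
  "SP \<phi> A e A0 A1 \<longleftrightarrow> compact A0 \<and> compact A1 \<and> A0 \<subseteq> A \<and> A1 \<subseteq> A \<and>
     uncountable (\<phi> ` A0) \<and> uncountable (\<phi> ` A1) \<and> \<phi> ` A0 \<inter> \<phi> ` A1 = {} \<and>
     (\<forall>x\<in>A0. \<forall>y\<in>A0. dist x y \<le> 2 * e) \<and> (\<forall>x\<in>A1. \<forall>y\<in>A1. dist x y \<le> 2 * e)"

lemma shrink2:
  fixes A :: "'a::metric_space set" and \<phi> :: "'a \<Rightarrow> 'b"
  assumes cA: "compact A" and uA: "uncountable (\<phi> ` A)" and e: "e > 0"
  shows "\<exists>B. compact B \<and> B \<subseteq> A \<and> uncountable (\<phi> ` B) \<and> (\<forall>x\<in>B. \<forall>y\<in>B. dist x y \<le> 2 * e)"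
proof -
  obtain c where c: "uncountable (\<phi> ` (A \<inter> cball c e))" using shrink[OF cA uA e] by blast
  have "compact (A \<inter> cball c e)" using cA by (intro compact_Int_closed) auto
  moreover have "\<forall>x\<in>A \<inter> cball c e. \<forall>y\<in>A \<inter> cball c e. dist x y \<le> 2 * e"
  proof (intro ballI)
    fix x y assume "x \<in> A \<inter> cball c e" "y \<in> A \<inter> cball c e"
    then have "dist c x \<le> e" "dist c y \<le> e" by auto
    moreover have "dist x y \<le> dist c x + dist c y" by (rule dist_triangle3)
    ultimately show "dist x y \<le> 2 * e" by linarith
  qed
  ultimately show ?thesis using c by blast
qed

lemma split_ex:
  fixes A :: "'a::metric_space set" and \<phi> :: "'a \<Rightarrow> 'b::metric_space"
  assumes cA: "compact A" and ct: "continuous_on A \<phi>" and uA: "uncountable (\<phi> ` A)" and e: "e > 0"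
  shows "\<exists>A0 A1. SP \<phi> A e A0 A1"
proof -
  define Y where "Y = \<phi> ` A"
  have cY: "compact Y" unfolding Y_def using compact_continuous_image[OF ct cA] .
  obtain y0 where y0: "y0 \<in> Y" "\<And>e. e > 0 \<Longrightarrow> uncountable (Y \<inter> ball y0 e)"
    using cond_pt[OF cY uA[folded Y_def]] by blast
  have a1: "uncountable (Y - {y0})" using uA[folded Y_def] by (rule uncountable_minus_countable) simp
  have a2: "Y - {y0} \<subseteq> (\<Union>m. Y - ball y0 (1 / real (Suc m)))"
  proof
    fix y assume y: "y \<in> Y - {y0}"
    then have "dist y0 y > 0" by auto
    then obtain n :: nat where n: "n \<noteq> 0" "inverse (real n) < dist y0 y"
      using real_arch_inverse by blast
    then have "1 / real (Suc (n - 1)) < dist y0 y" by (simp add: inverse_eq_divide)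
    then have "y \<in> Y - ball y0 (1 / real (Suc (n - 1)))" using y by simp
    then show "y \<in> (\<Union>m. Y - ball y0 (1 / real (Suc m)))" by blast
  qed
  have "\<exists>m. uncountable (Y - ball y0 (1 / real (Suc m)))"
  proof (rule ccontr)
    assume a3: "\<nexists>m. uncountable (Y - ball y0 (1 / real (Suc m)))"
    then have "countable (\<Union>m. Y - ball y0 (1 / real (Suc m)))" by (intro countable_UN) auto
    then show False using a1 a2 countable_subset by blast
  qed
  then obtain m where m: "uncountable (Y - ball y0 (1 / real (Suc m)))" by blast
  define r where "r = 1 / real (Suc m)"
  have r: "r > 0" unfolding r_def by simp
  define A0 where "A0 = A \<inter> \<phi> -` cball y0 (r / 2)"
  define A1 where "A1 = A \<inter> \<phi> -` (- ball y0 r)"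
  have clA: "closed A" using cA by (rule compact_imp_closed)
  have cA0: "compact A0"
  proof -
    have "closed A0" unfolding A0_def using continuous_closed_preimage[OF ct clA] by simp
    then have "compact (A \<inter> A0)" using cA by (rule compact_Int_closed[rotated])
    moreover have "A \<inter> A0 = A0" unfolding A0_def by blast
    ultimately show ?thesis by simp
  qed
  have cA1: "compact A1"
  proof -
    have "closed A1" unfolding A1_def by (rule continuous_closed_preimage[OF ct clA]) (simp add: open_ball closed_Compl)
    then have "compact (A \<inter> A1)" using cA by (rule compact_Int_closed[rotated])
    moreover have "A \<inter> A1 = A1" unfolding A1_def by blast
    ultimately show ?thesis by simp
  qed
  have iA0: "\<phi> ` A0 = Y \<inter> cball y0 (r / 2)" unfolding A0_def Y_def by blast
  have iA1: "\<phi> ` A1 = Y - ball y0 r" unfolding A1_def Y_def by blast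
  have uA0: "uncountable (\<phi> ` A0)"
  proof -
    have "Y \<inter> ball y0 (r / 2) \<subseteq> \<phi> ` A0" unfolding iA0 by auto
    moreover have "uncountable (Y \<inter> ball y0 (r / 2))" using y0(2) r by simp
    ultimately show ?thesis using countable_subset by blast
  qed
  have uA1: "uncountable (\<phi> ` A1)" unfolding iA1 r_def using m .
  obtain B0 where B0: "compact B0" "B0 \<subseteq> A0" "uncountable (\<phi> ` B0)" "\<forall>x\<in>B0. \<forall>y\<in>B0. dist x y \<le> 2 * e"
    using shrink2[OF cA0 uA0 e] by blast
  obtain B1 where B1: "compact B1" "B1 \<subseteq> A1" "uncountable (\<phi> ` B1)" "\<forall>x\<in>B1. \<forall>y\<in>B1. dist x y \<le> 2 * e"
    using shrink2[OF cA1 uA1 e] by blast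
  have d: "\<phi> ` A0 \<inter> \<phi> ` A1 = {}" unfolding iA0 iA1 using r by auto
  have "\<phi> ` B0 \<inter> \<phi> ` B1 = {}" using d B0(2) B1(2) by blast
  moreover have "B0 \<subseteq> A" "B1 \<subseteq> A" using B0(2) B1(2) unfolding A0_def A1_def by auto
  ultimately have "SP \<phi> A e B0 B1" unfolding SP_def using B0 B1 by blast
  then show ?thesis by blast
qed



lemma nest:
  fixes F :: "nat \<Rightarrow> 'a::metric_space set"
  assumes cF: "\<And>n. compact (F n)" and neF: "\<And>n. F n \<noteq> {}" and dF: "\<And>n. F (Suc n) \<subseteq> F n"
  shows "\<exists>x. \<forall>n. x \<in> F n"
proof -
  have dec: "F n \<subseteq> F m" if "m \<le> n" for m n
    using lift_Suc_antimono_le[of F, OF dF that] .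
  have "F 0 \<inter> \<Inter>(range F) \<noteq> {}"
  proof (rule compact_imp_fip[OF cF[of 0]])
    show "closed T" if "T \<in> range F" for T using that cF compact_imp_closed by blast
  next
    fix F' assume F': "finite F'" "F' \<subseteq> range F"
    then obtain I where I: "finite I" "F' = F ` I" using finite_subset_image[OF F'(1) F'(2)] by blast
    define N where "N = Max (insert 0 I)"
    have "F N \<subseteq> F 0 \<inter> \<Inter>F'"
    proof -
      have "F N \<subseteq> F i" if "i \<in> insert 0 I" for i
        using dec[of i N] that I(1) unfolding N_def by simp
      then show ?thesis unfolding I(2) by blast
    qed
    then show "F 0 \<inter> \<Inter>F' \<noteq> {}" using neF[of N] by blast
  qed
  then show ?thesis by blast
qed

lemma SPD:
  assumes "SP \<phi> A e A0 A1"
  shows "compact A0" "compact A1" "A0 \<subseteq> A" "A1 \<subseteq> A" "uncountable (\<phi> ` A0)" "uncountable (\<phi> ` A1)"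
    "\<phi> ` A0 \<inter> \<phi> ` A1 = {}" "\<And>x y. x \<in> A0 \<Longrightarrow> y \<in> A0 \<Longrightarrow> dist x y \<le> 2 * e"
    "\<And>x y. x \<in> A1 \<Longrightarrow> y \<in> A1 \<Longrightarrow> dist x y \<le> 2 * e"
  using assms unfolding SP_def
  apply (simp_all only:)
  apply simp_all
  done

definition spl :: "('a::metric_space \<Rightarrow> 'b) \<Rightarrow> 'a set \<Rightarrow> real \<Rightarrow> 'a set \<times> 'a set" where
  "spl \<phi> A e = (SOME p. SP \<phi> A e (fst p) (snd p))"

lemma spl_SP:
  fixes \<phi> :: "'a::metric_space \<Rightarrow> 'b::metric_space"
  assumes "compact A" "continuous_on A \<phi>" "uncountable (\<phi> ` A)" "e > 0"
  shows "SP \<phi> A e (fst (spl \<phi> A e)) (snd (spl \<phi> A e))"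
proof -
  obtain A0 A1 where A: "SP \<phi> A e A0 A1" using split_ex[OF assms] by blast
  have "\<exists>p. SP \<phi> A e (fst p) (snd p)"
  proof
    show "SP \<phi> A e (fst (A0, A1)) (snd (A0, A1))" using A by simp
  qed
  then show ?thesis unfolding spl_def by (rule someI_ex)
qed

primrec tree :: "('a::metric_space \<Rightarrow> 'b::metric_space) \<Rightarrow> 'a set \<Rightarrow> bool list \<Rightarrow> 'a set" where
  "tree \<phi> K [] = K"
| "tree \<phi> K (b # s) = (if b then snd else fst) (spl \<phi> (tree \<phi> K s) (1 / real (Suc (length s))))"

definition Qset :: "('a::metric_space \<Rightarrow> 'b::metric_space) \<Rightarrow> 'a set \<Rightarrow> 'a set" where
  "Qset \<phi> K = (\<Inter>n. \<Union>s\<in>{s. length s = n}. tree \<phi> K s)"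

primrec pref :: "(nat \<Rightarrow> bool) \<Rightarrow> nat \<Rightarrow> bool list" where
  "pref a 0 = []"
| "pref a (Suc n) = a n # pref a n"

lemma length_pref [simp]: "length (pref a n) = n"
  by (induction n) auto

lemma finite_level: "finite {s :: bool list. length s = n}"
proof -
  have "{s :: bool list. length s = n} = {s. set s \<subseteq> UNIV \<and> length s = n}" by simp
  then show ?thesis using finite_lists_length_eq[of "UNIV :: bool set" n] by simp
qed

lemma uncountable_UNIV_bool_fun: "uncountable (UNIV :: (nat \<Rightarrow> bool) set)"
proof
  assume "countable (UNIV :: (nat \<Rightarrow> bool) set)"
  then obtain f :: "(nat \<Rightarrow> bool) \<Rightarrow> nat" where f: "inj f" unfolding countable_def by blast
  define g where "g = inv f"
  define d where "d n = (\<not> g n n)" for n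
  have "g (f d) = d" unfolding g_def using f by simp
  then have "d (f d) = g (f d) (f d)" by simp
  then show False unfolding d_def by simp
qed

context
  fixes \<phi> :: "'a::metric_space \<Rightarrow> 'b::metric_space" and K :: "'a set"
  assumes cK: "compact K" and ct: "continuous_on K \<phi>" and uK: "uncountable (\<phi> ` K)"
begin

lemma tree_inv: "compact (tree \<phi> K s) \<and> uncountable (\<phi> ` tree \<phi> K s) \<and> tree \<phi> K s \<subseteq> K"
proof (induction s)
  case Nil
  then show ?case using cK uK by simp
next
  case (Cons b s)
  define A where "A = tree \<phi> K s"
  define e where "e = 1 / real (Suc (length s))"
  have IH: "compact A" "uncountable (\<phi> ` A)" "A \<subseteq> K" using Cons.IH unfolding A_def by auto
  have ct': "continuous_on A \<phi>" using ct IH(3) by (rule continuous_on_subset)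
  have ep: "e > 0" unfolding e_def by simp
  have sp: "SP \<phi> A e (fst (spl \<phi> A e)) (snd (spl \<phi> A e))"
    by (rule spl_SP[OF IH(1) ct' IH(2) ep])
  have P0: "compact (fst (spl \<phi> A e))" "uncountable (\<phi> ` fst (spl \<phi> A e))" "fst (spl \<phi> A e) \<subseteq> A"
    using SPD[OF sp] by auto
  have P1: "compact (snd (spl \<phi> A e))" "uncountable (\<phi> ` snd (spl \<phi> A e))" "snd (spl \<phi> A e) \<subseteq> A"
    using SPD[OF sp] by auto
  have tb: "tree \<phi> K (b # s) = (if b then snd (spl \<phi> A e) else fst (spl \<phi> A e))"
    unfolding A_def e_def by simp
  show ?case
  proof (cases b)
    case True
    then show ?thesis using P1 IH(3) tb by auto
  next
    case False
    then show ?thesis using P0 IH(3) tb by auto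
  qed
qed

lemma tree_SP: "SP \<phi> (tree \<phi> K s) (1 / real (Suc (length s))) (tree \<phi> K (False # s)) (tree \<phi> K (True # s))"
proof -
  define A where "A = tree \<phi> K s"
  define e where "e = 1 / real (Suc (length s))"
  have IH: "compact A" "uncountable (\<phi> ` A)" "A \<subseteq> K" using tree_inv unfolding A_def by auto
  have ct': "continuous_on A \<phi>" using ct IH(3) by (rule continuous_on_subset)
  have ep: "e > 0" unfolding e_def by simp
  have sp: "SP \<phi> A e (fst (spl \<phi> A e)) (snd (spl \<phi> A e))"
    by (rule spl_SP[OF IH(1) ct' IH(2) ep])
  have "tree \<phi> K (False # s) = fst (spl \<phi> A e)" "tree \<phi> K (True # s) = snd (spl \<phi> A e)"
    unfolding A_def e_def by simp_all
  then show ?thesis using sp unfolding A_def e_def by simp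
qed

lemma tree_sub: "tree \<phi> K (b # s) \<subseteq> tree \<phi> K s"
  using SPD(3,4)[OF tree_SP[of s]] by (cases b) auto

lemma tree_diam: "x \<in> tree \<phi> K (b # s) \<Longrightarrow> y \<in> tree \<phi> K (b # s) \<Longrightarrow> dist x y \<le> 2 * (1 / real (Suc (length s)))"
  using SPD(8,9)[OF tree_SP[of s]] by (cases b) auto

lemma tree_disj: "\<phi> ` tree \<phi> K (False # s) \<inter> \<phi> ` tree \<phi> K (True # s) = {}"
  using SPD(7)[OF tree_SP[of s]] .

lemma tree_ne: "tree \<phi> K s \<noteq> {}"
  using tree_inv[of s] by auto

lemma tree_compact: "compact (tree \<phi> K s)"
  using tree_inv by blast

lemma tree_level: "length s = length t \<Longrightarrow> s \<noteq> t \<Longrightarrow> \<phi> ` tree \<phi> K s \<inter> \<phi> ` tree \<phi> K t = {}"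
proof (induction s arbitrary: t)
  case Nil
  then show ?case by simp
next
  case (Cons b s)
  then obtain c t' where t: "t = c # t'" by (cases t) auto
  have len: "length s = length t'" using Cons.prems t by simp
  show ?case
  proof (cases "s = t'")
    case True
    then have "b \<noteq> c" using Cons.prems t by simp
    then show ?thesis using tree_disj[of s] True t by (cases b) (auto simp: Int_commute)
  next
    case False
    then have "\<phi> ` tree \<phi> K s \<inter> \<phi> ` tree \<phi> K t' = {}" using Cons.IH len by blast
    moreover have "tree \<phi> K (b # s) \<subseteq> tree \<phi> K s" "tree \<phi> K (c # t') \<subseteq> tree \<phi> K t'"
      by (rule tree_sub)+
    ultimately show ?thesis using t by blast
  qed
qed

lemma tree_level_set: "length s = length t \<Longrightarrow> s \<noteq> t \<Longrightarrow> tree \<phi> K s \<inter> tree \<phi> K t = {}"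
  using tree_level by blast

lemma tree_append: "tree \<phi> K (p @ s) \<subseteq> tree \<phi> K s"
proof (induction p)
  case Nil then show ?case by simp
next
  case (Cons a p)
  then show ?case using tree_sub[of a "p @ s"] by simp
qed

lemma tree_diam2: "s \<noteq> [] \<Longrightarrow> x \<in> tree \<phi> K s \<Longrightarrow> y \<in> tree \<phi> K s \<Longrightarrow> dist x y \<le> 2 / real (length s)"
  using tree_diam by (cases s) auto

lemma Q_level: "x \<in> Qset \<phi> K \<Longrightarrow> \<exists>s. length s = n \<and> x \<in> tree \<phi> K s"
  unfolding Qset_def by blast

lemma Q_tree: "\<exists>x. x \<in> Qset \<phi> K \<and> x \<in> tree \<phi> K s"
proof -
  define F where "F m = tree \<phi> K (replicate m False @ s)" for m
  have "\<exists>x. \<forall>m. x \<in> F m"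
  proof (rule nest)
    show "compact (F n)" for n unfolding F_def by (rule tree_compact)
    show "F n \<noteq> {}" for n unfolding F_def by (rule tree_ne)
    show "F (Suc n) \<subseteq> F n" for n unfolding F_def using tree_sub[of False "replicate n False @ s"] by simp
  qed
  then obtain x where x: "\<And>m. x \<in> F m" by blast
  have "x \<in> Qset \<phi> K" unfolding Qset_def
  proof (intro INT_I)
    fix n :: nat
    show "x \<in> (\<Union>s\<in>{s. length s = n}. tree \<phi> K s)"
    proof (cases "length s \<le> n")
      case True
      have "length (replicate (n - length s) False @ s) = n" using True by simp
      moreover have "x \<in> tree \<phi> K (replicate (n - length s) False @ s)" using x[of "n - length s"] unfolding F_def .
      ultimately show ?thesis by blast
    next
      case False
      define p where "p = take (length s - n) s"
      define q where "q = drop (length s - n) s"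
      have "s = p @ q" unfolding p_def q_def by simp
      then have "tree \<phi> K s \<subseteq> tree \<phi> K q" using tree_append[of p q] by simp
      moreover have "x \<in> tree \<phi> K s" using x[of 0] unfolding F_def by simp
      moreover have "length q = n" unfolding q_def using False by simp
      ultimately show ?thesis by blast
    qed
  qed
  moreover have "x \<in> tree \<phi> K s" using x[of 0] unfolding F_def by simp
  ultimately show ?thesis by blast
qed

lemma Q_closed: "closed (Qset \<phi> K)"
  unfolding Qset_def
proof (intro closed_INT ballI closed_UN finite_level)
  fix n s show "closed (tree \<phi> K s)" using tree_compact compact_imp_closed by blast
qed

lemma Q_sub: "Qset \<phi> K \<subseteq> K"
proof
  fix x assume "x \<in> Qset \<phi> K"
  then obtain s where "length s = 0" "x \<in> tree \<phi> K s" using Q_level by blast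
  then show "x \<in> K" by simp
qed

lemma Q_compact: "compact (Qset \<phi> K)"
proof -
  have "compact (K \<inter> Qset \<phi> K)" using cK Q_closed by (rule compact_Int_closed)
  moreover have "K \<inter> Qset \<phi> K = Qset \<phi> K" using Q_sub by blast
  ultimately show ?thesis by simp
qed

lemma small_level:
  assumes "d > 0"
  obtains n :: nat where "n \<noteq> 0" "2 / real n < d"
proof -
  obtain n :: nat where n: "n \<noteq> 0" "inverse (real n) < d / 2"
    using real_arch_inverse[of "d/2"] assms by auto
  then have "2 / real n < d" by (simp add: inverse_eq_divide field_simps)
  then show ?thesis using n(1) that by blast
qed

lemma Q_sep:
  assumes x: "x \<in> Qset \<phi> K" and y: "y \<in> Qset \<phi> K" and xy: "x \<noteq> y"
  obtains s t where "length s = length t" "s \<noteq> t" "x \<in> tree \<phi> K s" "y \<in> tree \<phi> K t"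
proof -
  have "dist x y > 0" using xy by simp
  then obtain n :: nat where n: "n \<noteq> 0" "2 / real n < dist x y" using small_level by blast
  obtain s where s: "length s = n" "x \<in> tree \<phi> K s" using Q_level[OF x] by blast
  obtain t where t: "length t = n" "y \<in> tree \<phi> K t" using Q_level[OF y] by blast
  have "s \<noteq> t"
  proof
    assume "s = t"
    then have "dist x y \<le> 2 / real (length s)" using tree_diam2[of s x y] s t n(1) by auto
    then show False using n s(1) by simp
  qed
  moreover have "length s = length t" using s t by simp
  ultimately show ?thesis using that s(2) t(2) by blast
qed

lemma Q_inj: "inj_on \<phi> (Qset \<phi> K)"
proof (rule inj_onI, rule ccontr)
  fix x y assume xy: "x \<in> Qset \<phi> K" "y \<in> Qset \<phi> K" "\<phi> x = \<phi> y" "x \<noteq> y"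
  then obtain s t where st: "length s = length t" "s \<noteq> t" "x \<in> tree \<phi> K s" "y \<in> tree \<phi> K t"
    using Q_sep by metis
  then have "\<phi> ` tree \<phi> K s \<inter> \<phi> ` tree \<phi> K t = {}" using tree_level by blast
  then show False using st(3,4) xy(3) by blast
qed

lemma Q_perfect: "x \<in> Qset \<phi> K \<Longrightarrow> x islimpt Qset \<phi> K"
  unfolding islimpt_approachable
proof (intro allI impI)
  fix e :: real assume x: "x \<in> Qset \<phi> K" and e: "e > 0"
  obtain n :: nat where n: "n \<noteq> 0" "2 / real n < e" using small_level[OF e] by blast
  obtain s where s: "length s = n" "x \<in> tree \<phi> K s" using Q_level[OF x] by blast
  obtain y0 where y0: "y0 \<in> Qset \<phi> K" "y0 \<in> tree \<phi> K (False # s)" using Q_tree by blast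
  obtain y1 where y1: "y1 \<in> Qset \<phi> K" "y1 \<in> tree \<phi> K (True # s)" using Q_tree by blast
  have "y0 \<noteq> y1" using tree_disj[of s] y0(2) y1(2) by blast
  then obtain y where y: "y \<in> {y0, y1}" "y \<noteq> x" by blast
  have yQ: "y \<in> Qset \<phi> K" using y y0 y1 by auto
  have "y \<in> tree \<phi> K s" using y y0(2) y1(2) tree_sub by blast
  then have "dist y x \<le> 2 / real (length s)" using tree_diam2 s n(1) by auto
  then have "dist y x < e" using n s(1) by simp
  then show "\<exists>x'\<in>Qset \<phi> K. x' \<noteq> x \<and> dist x' x < e" using yQ y(2) by blast
qed

lemma Q_td: "totally_disconnected_set (Qset \<phi> K)"
  unfolding totally_disconnected_set_def
proof (intro allI impI ballI)
  fix C x y assume C: "C \<subseteq> Qset \<phi> K \<and> connected C" and xy: "x \<in> C" "y \<in> C"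
  show "x = y"
  proof (rule ccontr)
    assume "x \<noteq> y"
    then obtain s t where st: "length s = length t" "s \<noteq> t" "x \<in> tree \<phi> K s" "y \<in> tree \<phi> K t"
      using Q_sep[of x y] C xy by blast
    define E1 where "E1 = tree \<phi> K s"
    define E2 where "E2 = (\<Union>u\<in>{u. length u = length s \<and> u \<noteq> s}. tree \<phi> K u)"
    have cl1: "closed E1" unfolding E1_def using tree_compact compact_imp_closed by blast
    have cl2: "closed E2" unfolding E2_def
    proof (intro closed_UN ballI)
      show "finite {u :: bool list. length u = length s \<and> u \<noteq> s}"
        using finite_level[of "length s"] by (rule rev_finite_subset) auto
      fix u show "closed (tree \<phi> K u)" using tree_compact compact_imp_closed by blast
    qed
    have "E1 \<inter> E2 = {}" unfolding E1_def E2_def using tree_level_set by blast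
    then have d: "E1 \<inter> E2 \<inter> C = {}" by blast
    have cov: "C \<subseteq> E1 \<union> E2"
    proof
      fix z assume "z \<in> C"
      then have "z \<in> Qset \<phi> K" using C by blast
      then obtain u where "length u = length s" "z \<in> tree \<phi> K u" using Q_level by blast
      then show "z \<in> E1 \<union> E2" unfolding E1_def E2_def by (cases "u = s") auto
    qed
    have "E1 \<inter> C = {} \<or> E2 \<inter> C = {}" using connected_closedD[OF _ d cov cl1 cl2] C by blast
    moreover have "x \<in> E1 \<inter> C" using st(3) xy(1) unfolding E1_def by blast
    moreover have "y \<in> E2 \<inter> C" using st xy(2) unfolding E2_def by auto
    ultimately show False by blast
  qed
qed

lemma Q_uncountable: "uncountable (Qset \<phi> K)"
proof -
  have "\<exists>z. \<forall>n. z \<in> tree \<phi> K (pref a n)" for a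
  proof (rule nest)
    show "compact (tree \<phi> K (pref a n))" for n by (rule tree_compact)
    show "tree \<phi> K (pref a n) \<noteq> {}" for n by (rule tree_ne)
    show "tree \<phi> K (pref a (Suc n)) \<subseteq> tree \<phi> K (pref a n)" for n
      unfolding pref.simps(2) by (rule tree_sub)
  qed
  then have "\<forall>a. \<exists>z. \<forall>n. z \<in> tree \<phi> K (pref a n)" by blast
  then obtain h where h0: "\<forall>a. \<forall>n. h a \<in> tree \<phi> K (pref a n)"
    by (rule choice_iff[THEN iffD1, elim_format]) blast
  have h: "\<And>a n. h a \<in> tree \<phi> K (pref a n)" using h0 by blast
  have hQ: "h a \<in> Qset \<phi> K" for a
    unfolding Qset_def
  proof (intro INT_I)
    fix n show "h a \<in> (\<Union>s\<in>{s. length s = n}. tree \<phi> K s)"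
      using h[of a n] length_pref[of a n] by blast
  qed
  have "inj h"
  proof (rule injI, rule ccontr)
    fix a a' assume eq: "h a = h a'" and ne: "a \<noteq> a'"
    then obtain i where i: "a i \<noteq> a' i" by (auto simp: fun_eq_iff)
    have "pref a (Suc i) \<noteq> pref a' (Suc i)" using i by simp
    then have dj: "tree \<phi> K (pref a (Suc i)) \<inter> tree \<phi> K (pref a' (Suc i)) = {}"
      by (intro tree_level_set) (simp only: length_pref)
    have m1: "h a \<in> tree \<phi> K (pref a (Suc i))" by (rule h)
    have m2: "h a \<in> tree \<phi> K (pref a' (Suc i))" unfolding eq by (rule h)
    show False using dj m1 m2 by blast
  qed
  then have "uncountable (range h)"
    using uncountable_UNIV_bool_fun countable_image_inj_on by blast
  moreover have "range h \<subseteq> Qset \<phi> K" using hQ by blast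
  ultimately show ?thesis using countable_subset by blast
qed

lemma Q_cantor: "cantor_set (Qset \<phi> K)"
  unfolding cantor_set_def
proof (intro conjI ballI)
  show "Qset \<phi> K \<noteq> {}" using Q_tree[of "[]"] by blast
qed (use Q_compact Q_perfect Q_td in auto)

end

lemma cantor_inj_ex:
  fixes \<phi> :: "'a::metric_space \<Rightarrow> 'b::metric_space"
  assumes "compact K" "continuous_on K \<phi>" "uncountable (\<phi> ` K)"
  shows "\<exists>Q. cantor_set Q \<and> Q \<subseteq> K \<and> inj_on \<phi> Q \<and> uncountable Q"
  apply (rule exI[of _ "Qset \<phi> K"])
  using Q_cantor[OF assms] Q_sub[OF assms] Q_inj[OF assms] Q_uncountable[OF assms] by simp



lemma funpow_cont:
  fixes f :: "'a::metric_space \<Rightarrow> 'a"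
  assumes ct: "continuous_on X f" and fX: "f ` X \<subseteq> X"
  shows "continuous_on X (f ^^ n) \<and> (f ^^ n) ` X \<subseteq> X"
proof (induction n)
  case 0
  then show ?case by (simp add: continuous_on_id)
next
  case (Suc n)
  have e: "f ^^ Suc n = f \<circ> (f ^^ n)" by simp
  have "continuous_on ((f ^^ n) ` X) f" using ct Suc.IH continuous_on_subset by blast
  then have "continuous_on X (f \<circ> (f ^^ n))" using Suc.IH continuous_on_compose by blast
  moreover have "(f \<circ> (f ^^ n)) ` X \<subseteq> X" using Suc.IH fX by (auto simp: image_comp[symmetric])
  ultimately show ?case unfolding e by simp
qed

lemma cpieces_ex:
  fixes S :: "'a::metric_space set"
  assumes cS: "compact S" and uS: "uncountable S"
  shows "\<exists>P. (\<forall>k::nat. compact (P k) \<and> P k \<subseteq> S \<and> uncountable (P k)) \<and> (\<forall>k j. k \<noteq> j \<longrightarrow> P k \<inter> P j = {})"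
proof -
  define R where "R = rec_nat S (\<lambda>_ A. snd (spl (id :: 'a \<Rightarrow> 'a) A 1))"
  have R0: "R 0 = S" unfolding R_def by simp
  have RS: "R (Suc k) = snd (spl (id :: 'a \<Rightarrow> 'a) (R k) 1)" for k unfolding R_def by simp
  define P where "P k = fst (spl (id :: 'a \<Rightarrow> 'a) (R k) 1)" for k
  have inv: "compact (R k) \<and> uncountable (R k) \<and> R k \<subseteq> S" for k
  proof (induction k)
    case 0 then show ?case using cS uS R0 by simp
  next
    case (Suc k)
    have sp: "SP id (R k) 1 (fst (spl id (R k) 1)) (snd (spl id (R k) 1))"
      by (rule spl_SP) (use Suc.IH in \<open>auto simp: continuous_on_id\<close>)
    show ?case using SPD[OF sp] Suc.IH unfolding RS by auto
  qed
  have spk: "SP id (R k) 1 (P k) (R (Suc k))" for k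
    unfolding P_def RS by (rule spl_SP) (use inv[of k] in \<open>auto simp: continuous_on_id\<close>)
  have Pk: "compact (P k) \<and> P k \<subseteq> S \<and> uncountable (P k)" for k
    using SPD[OF spk[of k]] inv[of k] by auto
  have dec: "R m \<subseteq> R k" if "k \<le> m" for k m
    using lift_Suc_antimono_le[of R, OF _ that] SPD(4)[OF spk] by blast
  have dj: "P k \<inter> P j = {}" if "j < k" for j k
  proof -
    have "P k \<subseteq> R (Suc j)" using SPD(3)[OF spk[of k]] dec[of "Suc j" k] that by auto
    moreover have "P j \<inter> R (Suc j) = {}" using SPD(7)[OF spk[of j]] by simp
    ultimately show ?thesis by blast
  qed
  have "(\<forall>k::nat. compact (P k) \<and> P k \<subseteq> S \<and> uncountable (P k)) \<and> (\<forall>k j. k \<noteq> j \<longrightarrow> P k \<inter> P j = {})"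
  proof
    show "\<forall>k::nat. compact (P k) \<and> P k \<subseteq> S \<and> uncountable (P k)" using Pk by blast
    show "\<forall>k j. k \<noteq> j \<longrightarrow> P k \<inter> P j = {}"
    proof (intro allI impI)
      fix k j :: nat assume "k \<noteq> j"
      then show "P k \<inter> P j = {}" using dj[of j k] dj[of k j] by (cases "j < k") auto
    qed
  qed
  note PP = this
  show ?thesis
    apply (rule_tac x=P in exI)
    using PP by blast
qed



lemma cantor_case:
  fixes X :: "'a::metric_space set" and f :: "'a \<Rightarrow> 'a"
  assumes cX: "compact X" and ct: "continuous_on X f" and fX: "f ` X \<subseteq> X"
    and uS: "uncountable S" and sc: "synd_scrambled X f S"
    and hyp: "\<forall>U. openin (top_of_set X) U \<and> U \<noteq> {} \<longrightarrow> (\<exists>n. (f ^^ n) ` S \<subseteq> (f ^^ n) ` U)"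
    and cS: "cantor_set S"
  shows "\<exists>T. c_dense X T \<and> synd_scrambled X f T \<and> (mycielski_set T \<and> X \<subseteq> closure T) \<and>
         (\<forall>\<epsilon>. synd_eps_scrambled X f \<epsilon> S \<longrightarrow> synd_eps_scrambled X f \<epsilon> T)"
proof -
  have SX: "S \<subseteq> X" using sc unfolding synd_scrambled_def by auto
  have neX: "X \<noteq> {}" using SX uS by auto
  have cptS: "compact S" using cS unfolding cantor_set_def by blast
  obtain c r where cr: "\<forall>k::nat. c k \<in> X \<and> r k > (0::real)"
    and bas: "\<forall>U. openin (top_of_set X) U \<and> U \<noteq> {} \<longrightarrow> (\<exists>k. ball (c k) (r k) \<inter> X \<subseteq> U)"
    using basis_ex[OF cX neX] by blast
  define V where "V k = ball (c k) (r k / 2) \<inter> X" for k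
  have Vo: "openin (top_of_set X) (V k) \<and> V k \<noteq> {}" for k
  proof
    show "openin (top_of_set X) (V k)" unfolding V_def
      using openin_open_Int[of "ball (c k) (r k / 2)" X] by (simp add: Int_commute)
    have "c k \<in> V k" using cr by (simp add: V_def)
    then show "V k \<noteq> {}" by blast
  qed
  have "\<forall>k. \<exists>n. (f ^^ n) ` S \<subseteq> (f ^^ n) ` V k"
  proof
    fix k show "\<exists>n. (f ^^ n) ` S \<subseteq> (f ^^ n) ` V k" using hyp[rule_format, OF Vo[of k]] .
  qed
  then obtain n where n: "\<And>k. (f ^^ n k) ` S \<subseteq> (f ^^ n k) ` V k"
    by (rule choice_iff[THEN iffD1, elim_format]) blast
  obtain P where P: "\<And>k::nat. compact (P k) \<and> P k \<subseteq> S \<and> uncountable (P k)"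
    "\<And>k j. k \<noteq> j \<Longrightarrow> P k \<inter> P j = {}"
    using cpieces_ex[OF cptS uS] by blast
  have fc: "continuous_on X (f ^^ m) \<and> (f ^^ m) ` X \<subseteq> X" for m
    using funpow_cont[OF ct fX] .
  have injS: "inj_on (f ^^ m) S" for m
  proof (rule inj_onI)
    fix s t assume st: "s \<in> S" "t \<in> S" "(f ^^ m) s = (f ^^ m) t"
    have "trk f s t" unfolding trk_def using st(3) by blast
    moreover have "trk f s s" unfolding trk_def by blast
    ultimately show "s = t" using trk_unique[OF sc st(1) st(2)] by blast
  qed
  define K where "K k = (X \<inter> cball (c k) (r k / 2)) \<inter> (f ^^ n k) -` ((f ^^ n k) ` P k)" for k
  have KX: "K k \<subseteq> X \<inter> cball (c k) (r k / 2)" for k unfolding K_def by blast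
  have cK: "compact (K k)" for k
  proof -
    have c1: "compact (X \<inter> cball (c k) (r k / 2))" using cX by (rule compact_Int_closed) simp
    have ct1: "continuous_on (X \<inter> cball (c k) (r k / 2)) (f ^^ n k)"
      using fc[of "n k"] continuous_on_subset by blast
    have "compact ((f ^^ n k) ` P k)"
      using compact_continuous_image[OF continuous_on_subset[OF conjunct1[OF fc[of "n k"]]] conjunct1[OF P(1)[of k]]]
        P(1)[of k] SX by blast
    then have "closed ((f ^^ n k) ` P k)" by (rule compact_imp_closed)
    then have "closed (K k)" unfolding K_def
      by (rule continuous_closed_preimage[OF ct1 compact_imp_closed[OF c1]])
    then have "compact ((X \<inter> cball (c k) (r k / 2)) \<inter> K k)" using c1 by (rule compact_Int_closed[rotated])
    moreover have "(X \<inter> cball (c k) (r k / 2)) \<inter> K k = K k" using KX by blast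
    ultimately show ?thesis by simp
  qed
  have ctK: "continuous_on (K k) (f ^^ n k)" for k
    using fc[of "n k"] KX[of k] continuous_on_subset by blast
  have uK: "uncountable ((f ^^ n k) ` K k)" for k
  proof -
    have "(f ^^ n k) ` P k \<subseteq> (f ^^ n k) ` K k"
    proof
      fix z assume "z \<in> (f ^^ n k) ` P k"
      then obtain s where s: "s \<in> P k" "z = (f ^^ n k) s" by blast
      then have "s \<in> S" using P(1) by blast
      then have "z \<in> (f ^^ n k) ` V k" using n s(2) by blast
      then obtain x where x: "x \<in> V k" "z = (f ^^ n k) x" by blast
      have "(f ^^ n k) x \<in> (f ^^ n k) ` P k" using s x(2) by (metis image_eqI)
      then have "x \<in> K k" unfolding K_def using x(1) unfolding V_def by auto
      then show "z \<in> (f ^^ n k) ` K k" using x(2) by blast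
    qed
    moreover have "uncountable ((f ^^ n k) ` P k)"
    proof
      assume "countable ((f ^^ n k) ` P k)"
      moreover have "inj_on (f ^^ n k) (P k)" using injS P(1)[of k] inj_on_subset by blast
      ultimately have "countable (P k)" by (rule countable_image_inj_on)
      then show False using P(1)[of k] by blast
    qed
    ultimately show ?thesis using countable_subset by blast
  qed
  have "\<forall>k. \<exists>Q. cantor_set Q \<and> Q \<subseteq> K k \<and> inj_on (f ^^ n k) Q \<and> uncountable Q"
  proof
    fix k show "\<exists>Q. cantor_set Q \<and> Q \<subseteq> K k \<and> inj_on (f ^^ n k) Q \<and> uncountable Q"
      by (rule cantor_inj_ex[OF cK ctK uK])
  qed
  then obtain Q where Q0: "\<forall>k. cantor_set (Q k) \<and> Q k \<subseteq> K k \<and> inj_on (f ^^ n k) (Q k) \<and> uncountable (Q k)"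
    by (rule choice_iff[THEN iffD1, elim_format]) blast
  have Q: "cantor_set (Q k)" "Q k \<subseteq> K k" "inj_on (f ^^ n k) (Q k)" "uncountable (Q k)" for k
    using Q0 by blast+
  define T where "T = (\<Union>k. Q k)"
  have TX: "T \<subseteq> X" unfolding T_def using Q(2) KX by blast
  have unc: "uncountable (T \<inter> U)" if "openin (top_of_set X) U" "U \<noteq> {}" for U
  proof -
    have "\<exists>k. ball (c k) (r k) \<inter> X \<subseteq> U" using bas[rule_format, OF conjI[OF that]] .
    then obtain k where k: "ball (c k) (r k) \<inter> X \<subseteq> U" by blast
    have rk: "r k > 0" using cr by blast
    have "X \<inter> cball (c k) (r k / 2) \<subseteq> ball (c k) (r k) \<inter> X"
    proof
      fix z assume "z \<in> X \<inter> cball (c k) (r k / 2)"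
      then have "z \<in> X" "dist (c k) z \<le> r k / 2" by auto
      moreover have "r k / 2 < r k" using rk by simp
      ultimately show "z \<in> ball (c k) (r k) \<inter> X" by simp
    qed
    then have "Q k \<subseteq> T \<inter> U" using Q(2)[of k] KX[of k] k unfolding T_def by blast
    then show ?thesis using Q(4)[of k] countable_subset by blast
  qed
  have track: "\<exists>t\<in>P k. (f ^^ n k) x = (f ^^ n k) t" if "x \<in> Q k" for x k
  proof -
    have "x \<in> K k" using Q(2) that by blast
    then show ?thesis unfolding K_def by blast
  qed
  have tr: "\<exists>s\<in>S. trk f x s" if xT: "x \<in> T" for x
  proof -
    obtain k where "x \<in> Q k" using xT unfolding T_def by blast
    then obtain t where "t \<in> P k" "(f ^^ n k) x = (f ^^ n k) t" using track by blast
    then show ?thesis unfolding trk_def using P(1) by blast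
  qed
  have dis: "s \<noteq> s'" if xy: "x \<in> T" "y \<in> T" "x \<noteq> y" and ss: "s \<in> S" "s' \<in> S"
      and tt: "trk f x s" "trk f y s'" for x y s s'
  proof
    assume eq: "s = s'"
    obtain k where k: "x \<in> Q k" using xy(1) unfolding T_def by blast
    obtain j where j: "y \<in> Q j" using xy(2) unfolding T_def by blast
    obtain t where t: "t \<in> P k" "(f ^^ n k) x = (f ^^ n k) t" using track[OF k] by blast
    obtain t' where t': "t' \<in> P j" "(f ^^ n j) y = (f ^^ n j) t'" using track[OF j] by blast
    have tS: "t \<in> S" "t' \<in> S" using t(1) t'(1) P(1) by blast+
    have "trk f x t" unfolding trk_def using t(2) by blast
    then have "s = t" using trk_unique[OF sc ss(1) tS(1) tt(1)] by simp
    have "trk f y t'" unfolding trk_def using t'(2) by blast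
    then have "s' = t'" using trk_unique[OF sc ss(2) tS(2) tt(2)] by simp
    have "t = t'" using eq \<open>s = t\<close> \<open>s' = t'\<close> by simp
    then have "k = j" using P(2)[of k j] t(1) t'(1) by blast
    then have "(f ^^ n k) x = (f ^^ n k) y" using t(2) t'(2) \<open>t = t'\<close> by simp
    then have "x = y" using Q(3)[of k] k j \<open>k = j\<close> inj_onD by metis
    then show False using xy(3) by simp
  qed
  have R: "c_dense X T \<and> synd_scrambled X f T \<and>
         (\<forall>\<epsilon>. synd_eps_scrambled X f \<epsilon> S \<longrightarrow> synd_eps_scrambled X f \<epsilon> T)"
    apply (rule core[OF sc neX TX])
      apply (erule (1) unc)
     apply (erule tr)
    apply (rule dis; assumption)
    done
  have my: "mycielski_set T"
    unfolding mycielski_set_def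
  proof (rule exI[of _ "range Q"], intro conjI)
    show "countable (range Q)" by simp
    show "\<forall>C\<in>range Q. cantor_set C" using Q(1) by blast
    show "T = \<Union>(range Q)" unfolding T_def by simp
  qed
  have cl: "X \<subseteq> closure T"
  proof
    fix x assume x: "x \<in> X"
    show "x \<in> closure T" unfolding closure_approachable
    proof (intro allI impI)
      fix e :: real assume e: "e > 0"
      have "openin (top_of_set X) (ball x e \<inter> X)"
        using openin_open_Int[of "ball x e" X] by (simp add: Int_commute)
      moreover have "x \<in> ball x e \<inter> X" using x e by simp
      then have "ball x e \<inter> X \<noteq> {}" by blast
      ultimately have "uncountable (T \<inter> (ball x e \<inter> X))" by (rule unc)
      then obtain y where "y \<in> T" "y \<in> ball x e" by (metis IntE countable_empty equals0I)
      then show "\<exists>y\<in>T. dist y x < e" by (auto simp: dist_commute)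
    qed
  qed
  have "c_dense X T \<and> synd_scrambled X f T \<and> (mycielski_set T \<and> X \<subseteq> closure T) \<and>
         (\<forall>\<epsilon>. synd_eps_scrambled X f \<epsilon> S \<longrightarrow> synd_eps_scrambled X f \<epsilon> T)"
    using R my cl by blast
  then show ?thesis by (rule exI[of _ T])
qed


theorem lemma3p10:
  fixes X :: "'a::metric_space set" and f :: "'a \<Rightarrow> 'a" and S :: "'a set"
  assumes "compact X"
    and "continuous_on X f" and "f ` X \<subseteq> X"
    and "uncountable S" and "synd_scrambled X f S"
    and "\<forall>U. openin (top_of_set X) U \<and> U \<noteq> {} \<longrightarrow> (\<exists>n. (f ^^ n) ` S \<subseteq> (f ^^ n) ` U)"
  shows "\<exists>T. c_dense X T \<and> synd_scrambled X f T
           \<and> (cantor_set S \<longrightarrow> mycielski_set T \<and> X \<subseteq> closure T)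
           \<and> (\<forall>\<epsilon>. synd_eps_scrambled X f \<epsilon> S \<longrightarrow> synd_eps_scrambled X f \<epsilon> T)"
proof (cases "cantor_set S")
  case True
  obtain T where T: "c_dense X T \<and> synd_scrambled X f T \<and> (mycielski_set T \<and> X \<subseteq> closure T) \<and>
         (\<forall>\<epsilon>. synd_eps_scrambled X f \<epsilon> S \<longrightarrow> synd_eps_scrambled X f \<epsilon> T)"
    using cantor_case[OF assms True] by blast
  have "c_dense X T \<and> synd_scrambled X f T
           \<and> (cantor_set S \<longrightarrow> mycielski_set T \<and> X \<subseteq> closure T)
           \<and> (\<forall>\<epsilon>. synd_eps_scrambled X f \<epsilon> S \<longrightarrow> synd_eps_scrambled X f \<epsilon> T)"
    using T by blast
  then show ?thesis by (rule exI[of _ T])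
next
  case False
  obtain T where T: "c_dense X T \<and> synd_scrambled X f T \<and>
         (\<forall>\<epsilon>. synd_eps_scrambled X f \<epsilon> S \<longrightarrow> synd_eps_scrambled X f \<epsilon> T)"
    using gen_case[OF assms(1) assms(4) assms(5) assms(6)] by blast
  have "c_dense X T \<and> synd_scrambled X f T
           \<and> (cantor_set S \<longrightarrow> mycielski_set T \<and> X \<subseteq> closure T)
           \<and> (\<forall>\<epsilon>. synd_eps_scrambled X f \<epsilon> S \<longrightarrow> synd_eps_scrambled X f \<epsilon> T)"
    using T False by blast
  then show ?thesis by (rule exI[of _ T])
qed

end
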